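(* Let $X$ be a nonempty set, $G\le S_X$, and let $(G,(\lambda_x:x\in X/G))$ and $(G,(\kappa_x:x\in X/G))$ be rack envelopes (resp. quandle envelopes). For every $x\in X/G$ and $y\in xG$ let $g_y\in G$ be such that $xg_y=y$. Then the corresponding racks (resp. quandles) $\mathbf R(G,(\lambda_x))$ and $\mathbf R(G,(\kappa_x))$ are isomorphic if and only if there is $f\in N_{S_X}(G)$ such that $$\kappa_x=((\lambda_{yg_y^{-1}})^{g_y})^f$$ for every $x\in X/G$, where $y=xf^{-1}$.
   Context: Permutations act on the right ($xf$ is the image of $x$ under $f$; $fg$ means $f$ first, then $g$); $g^f=f^{-1}gf$, $f^G=\{f^g:g\in G\}$. For $G\le S_X$, $xG$ is the orbit of $x$, $G_x$ its stabilizer, $X/G$ a fixed complete set of orbit representatives; $C_G(H)$, $N_G(H)$, $Z(H)$ denote centralizer, normalizer and center. A left quasigroup is a groupoid $(X,* )$ whose left translations $L_x$ ($yL_x=x*y$) are bijections; a rack is a left quasigroup with $x*(y*z)=(x*y)*(x*z)$; a quandle is a rack with $x*x=x$; $\mathrm{LMlt}(X,* )=\langle L_x:x\in X\rangle$. A pair $(G,(\lambda_x:x\in X/G))$ with $G\le S_X$ is a rack envelope (resp. quandle envelope) if $\lambda_x\in C_G(G_x)$ (resp. $\lambda_x\in Z(G_x)$) for every $x\in X/G$ and $\langle\bigcup_{x\in X/G}\lambda_x^G\rangle=G$. The rack corresponding to such an envelope is $\mathbf R(G,\Lambda)=(X,* )$ defined by $L_y=(\lambda_x)^{g}$ whenever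 $x\in X/G$, $y\in xG$ and $g\in G$ with $xg=y$ (independent of the choice of $g$); its left multiplication group is $G$. *)

theory Defs
  imports "HOL-Combinatorics.Permutations"
begin

text \<open>Permutations of X are functions f with f permutes X (identity outside X).
  Right action: x f is written f x; the product fg (f first, then g) is g \<circ> f.\<close>

definition perm_group :: "'a set \<Rightarrow> ('a \<Rightarrow> 'a) set \<Rightarrow> bool" where
  "perm_group X G \<longleftrightarrow> G \<subseteq> {f. f permutes X} \<and> id \<in> G
     \<and> (\<forall>f\<in>G. \<forall>g\<in>G. g \<circ> f \<in> G) \<and> (\<forall>f\<in>G. inv f \<in> G)"

text \<open>g^f = f^{-1} g f (apply f^{-1}, then g, then f).\<close>
definition perm_conj :: "('a \<Rightarrow> 'a) \<Rightarrow> ('a \<Rightarrow> 'a) \<Rightarrow> ('a \<Rightarrow> 'a)" where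
  "perm_conj g f = f \<circ> g \<circ> inv f"

definition generated_perm_group :: "'a set \<Rightarrow> ('a \<Rightarrow> 'a) set \<Rightarrow> ('a \<Rightarrow> 'a) set" where
  "generated_perm_group X S = \<Inter>{H. perm_group X H \<and> S \<subseteq> H}"

definition perm_orbit :: "('a \<Rightarrow> 'a) set \<Rightarrow> 'a \<Rightarrow> 'a set" where
  "perm_orbit G x = (\<lambda>g. g x) ` G"

definition perm_stabilizer :: "('a \<Rightarrow> 'a) set \<Rightarrow> 'a \<Rightarrow> ('a \<Rightarrow> 'a) set" where
  "perm_stabilizer G x = {g \<in> G. g x = x}"

definition perm_centralizer :: "('a \<Rightarrow> 'a) set \<Rightarrow> ('a \<Rightarrow> 'a) set \<Rightarrow> ('a \<Rightarrow> 'a) set" where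
  "perm_centralizer G H = {g \<in> G. \<forall>h\<in>H. g \<circ> h = h \<circ> g}"

definition perm_center :: "('a \<Rightarrow> 'a) set \<Rightarrow> ('a \<Rightarrow> 'a) set" where
  "perm_center H = perm_centralizer H H"

definition sym_normalizer :: "'a set \<Rightarrow> ('a \<Rightarrow> 'a) set \<Rightarrow> ('a \<Rightarrow> 'a) set" where
  "sym_normalizer X G = {f. f permutes X \<and> (\<lambda>g. perm_conj g f) ` G = G}"

definition orbit_reps :: "'a set \<Rightarrow> ('a \<Rightarrow> 'a) set \<Rightarrow> 'a set \<Rightarrow> bool" where
  "orbit_reps X G T \<longleftrightarrow> T \<subseteq> X \<and> (\<forall>y\<in>X. \<exists>!x. x \<in> T \<and> y \<in> perm_orbit G x)"

definition rack_envelope ::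
  "'a set \<Rightarrow> ('a \<Rightarrow> 'a) set \<Rightarrow> 'a set \<Rightarrow> ('a \<Rightarrow> 'a \<Rightarrow> 'a) \<Rightarrow> bool" where
  "rack_envelope X G T lam \<longleftrightarrow>
     (\<forall>x\<in>T. lam x \<in> perm_centralizer G (perm_stabilizer G x))
     \<and> generated_perm_group X (\<Union>x\<in>T. (\<lambda>g. perm_conj (lam x) g) ` G) = G"

definition quandle_envelope ::
  "'a set \<Rightarrow> ('a \<Rightarrow> 'a) set \<Rightarrow> 'a set \<Rightarrow> ('a \<Rightarrow> 'a \<Rightarrow> 'a) \<Rightarrow> bool" where
  "quandle_envelope X G T lam \<longleftrightarrow>
     (\<forall>x\<in>T. lam x \<in> perm_center (perm_stabilizer G x))
     \<and> generated_perm_group X (\<Union>x\<in>T. (\<lambda>g. perm_conj (lam x) g) ` G) = G"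

definition env_rep :: "('a \<Rightarrow> 'a) set \<Rightarrow> 'a set \<Rightarrow> 'a \<Rightarrow> 'a" where
  "env_rep G T y = (THE x. x \<in> T \<and> y \<in> perm_orbit G x)"

text \<open>The operation of R(G,Lambda): y * z = z L_y with L_y = (lam x)^g, x g = y.\<close>
definition env_op ::
  "('a \<Rightarrow> 'a) set \<Rightarrow> 'a set \<Rightarrow> ('a \<Rightarrow> 'a \<Rightarrow> 'a) \<Rightarrow> 'a \<Rightarrow> 'a \<Rightarrow> 'a" where
  "env_op G T lam y z =
     (let x = env_rep G T y; g = (SOME g. g \<in> G \<and> g x = y) in perm_conj (lam x) g z)"

definition groupoid_iso ::
  "'a set \<Rightarrow> ('a \<Rightarrow> 'a \<Rightarrow> 'a) \<Rightarrow> ('a \<Rightarrow> 'a \<Rightarrow> 'a) \<Rightarrow> ('a \<Rightarrow> 'a) \<Rightarrow> bool" where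
  "groupoid_iso X op1 op2 \<phi> \<longleftrightarrow> bij_betw \<phi> X X
     \<and> (\<forall>y\<in>X. \<forall>z\<in>X. \<phi> (op1 y z) = op2 (\<phi> y) (\<phi> z))"

end

theory Submission
  imports Defs
begin

definition good_env :: "'a set \<Rightarrow> ('a \<Rightarrow> 'a) set \<Rightarrow> 'a set \<Rightarrow> ('a \<Rightarrow> 'a \<Rightarrow> 'a) \<Rightarrow> bool" where
  "good_env X G T lam \<longleftrightarrow> (\<forall>x\<in>T. lam x \<in> G \<and> (\<forall>h\<in>G. h x = x \<longrightarrow> lam x \<circ> h = h \<circ> lam x))
     \<and> generated_perm_group X (\<Union>x\<in>T. (\<lambda>g. perm_conj (lam x) g) ` G) = G"

lemma rack_good: "rack_envelope X G T lam \<Longrightarrow> good_env X G T lam"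
  unfolding rack_envelope_def good_env_def perm_centralizer_def perm_stabilizer_def by auto

lemma quandle_good: "quandle_envelope X G T lam \<Longrightarrow> good_env X G T lam"
  unfolding quandle_envelope_def good_env_def perm_center_def perm_centralizer_def perm_stabilizer_def
  by auto

lemma gen_le: "perm_group X H \<Longrightarrow> S \<subseteq> H \<Longrightarrow> generated_perm_group X S \<subseteq> H"
  unfolding generated_perm_group_def by auto

lemma conj_group:
  assumes pg: "perm_group X G" and p: "p permutes X"
  shows "perm_group X {g\<in>G. p \<circ> g \<circ> inv p \<in> G}"
proof -
  have G: "\<And>g. g \<in> G \<Longrightarrow> g permutes X" using pg unfolding perm_group_def by auto
  have bp: "bij p" using p permutes_bij by blast
  have i1: "p \<circ> inv p = id" "inv p \<circ> p = id" using permutes_inv_o[OF p] by auto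
  have idG: "id \<in> G" and cG: "\<And>f g. f \<in> G \<Longrightarrow> g \<in> G \<Longrightarrow> g \<circ> f \<in> G"
    and iG: "\<And>f. f \<in> G \<Longrightarrow> inv f \<in> G" using pg unfolding perm_group_def by auto
  have comp: "p \<circ> (g \<circ> f) \<circ> inv p = (p \<circ> g \<circ> inv p) \<circ> (p \<circ> f \<circ> inv p)" for g f
  proof -
    have "(p \<circ> g \<circ> inv p) \<circ> (p \<circ> f \<circ> inv p) = p \<circ> g \<circ> (inv p \<circ> p) \<circ> f \<circ> inv p"
      by (simp add: o_assoc)
    then show ?thesis using i1 by (simp add: o_assoc)
  qed
  have inv: "p \<circ> inv g \<circ> inv p = inv (p \<circ> g \<circ> inv p)" if "g \<in> G" for g
  proof -
    have bg: "bij g" using G[OF that] permutes_bij by blast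
    have bip: "bij (inv p)" using bp bij_imp_bij_inv by blast
    have "inv (p \<circ> g \<circ> inv p) = inv (inv p) \<circ> inv (p \<circ> g)"
      using o_inv_distrib[of "p \<circ> g" "inv p"] bp bg bip bij_comp by blast
    also have "\<dots> = p \<circ> (inv g \<circ> inv p)"
      using o_inv_distrib[OF bp bg] permutes_inv_inv[OF p] by simp
    finally show ?thesis by (simp add: o_assoc)
  qed
  show ?thesis unfolding perm_group_def
    using G idG cG iG i1 comp inv by auto
qed

locale env =
  fixes X :: "'a set" and G :: "('a \<Rightarrow> 'a) set" and T :: "'a set"
  assumes pg: "perm_group X G" and reps: "orbit_reps X G T"
begin

lemma G_perm: "g \<in> G \<Longrightarrow> g permutes X" using pg unfolding perm_group_def by auto
lemma G_id: "id \<in> G" using pg unfolding perm_group_def by auto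
lemma G_comp: "f \<in> G \<Longrightarrow> g \<in> G \<Longrightarrow> g \<circ> f \<in> G" using pg unfolding perm_group_def by auto
lemma G_inv: "f \<in> G \<Longrightarrow> inv f \<in> G" using pg unfolding perm_group_def by auto
lemma T_X: "T \<subseteq> X" using reps unfolding orbit_reps_def by auto

lemma rep: assumes "y \<in> X"
  shows "env_rep G T y \<in> T" "y \<in> perm_orbit G (env_rep G T y)"
proof -
  have "\<exists>!x. x \<in> T \<and> y \<in> perm_orbit G x" using reps assms unfolding orbit_reps_def by auto
  then have "env_rep G T y \<in> T \<and> y \<in> perm_orbit G (env_rep G T y)"
    unfolding env_rep_def by (rule theI')
  then show "env_rep G T y \<in> T" "y \<in> perm_orbit G (env_rep G T y)" by auto
qed

lemma rep_eq: assumes "x \<in> T" "y \<in> perm_orbit G x" shows "env_rep G T y = x"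
proof -
  have yX: "y \<in> X" using assms T_X G_perm unfolding perm_orbit_def
    by (auto simp: permutes_in_image)
  have "\<exists>!x. x \<in> T \<and> y \<in> perm_orbit G x" using reps yX unfolding orbit_reps_def by auto
  then show ?thesis using assms rep[OF yX] by blast
qed

lemma conjG: "g \<in> G \<Longrightarrow> l \<in> G \<Longrightarrow> perm_conj l g \<in> G"
  unfolding perm_conj_def using G_comp G_inv by (simp add: o_assoc)

lemma op_eq:
  assumes good: "good_env X G T lam" and y: "y \<in> X" and g: "g \<in> G" and gx: "g (env_rep G T y) = y"
  shows "env_op G T lam y = perm_conj (lam (env_rep G T y)) g"
proof -
  define x where "x = env_rep G T y"
  have xT: "x \<in> T" using rep[OF y] x_def by auto
  have ex: "\<exists>g. g \<in> G \<and> g x = y" using rep(2)[OF y] unfolding x_def[symmetric] perm_orbit_def by auto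
  define g0 where "g0 = (SOME g. g \<in> G \<and> g x = y)"
  have g0: "g0 \<in> G" "g0 x = y" using someI_ex[OF ex] g0_def by auto
  have bg0: "bij g0" and bg: "bij g" using G_perm g0 g permutes_bij by blast+
  define h where "h = inv g0 \<circ> g"
  have hG: "h \<in> G" using h_def G_comp G_inv g0 g by auto
  have hx: "h x = x" unfolding h_def using gx x_def g0 G_perm[OF g0(1)]
    by (simp add: permutes_inverses(2)) (metis permutes_inverses(2))
  have comm: "lam x \<circ> h = h \<circ> lam x" using good xT hG hx unfolding good_env_def by auto
  have gg: "g = g0 \<circ> h" unfolding h_def using permutes_inv_o[OF G_perm[OF g0(1)]] by (simp add: o_assoc)
  have bh: "bij h" using hG G_perm permutes_bij by blast
  have "perm_conj (lam x) g = g0 \<circ> (h \<circ> lam x) \<circ> inv h \<circ> inv g0"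
    unfolding perm_conj_def gg o_inv_distrib[OF bg0 bh] by (simp add: o_assoc)
  also have "\<dots> = g0 \<circ> lam x \<circ> (h \<circ> inv h) \<circ> inv g0" using comm by (metis o_assoc)
  also have "\<dots> = perm_conj (lam x) g0"
    using permutes_inv_o[OF G_perm[OF hG]] unfolding perm_conj_def by simp
  finally show ?thesis unfolding env_op_def Let_def x_def[symmetric] g0_def by simp
qed

lemma op_T:
  assumes good: "good_env X G T lam" and x: "x \<in> T" and g: "g \<in> G"
  shows "env_op G T lam (g x) = perm_conj (lam x) g"
proof -
  have o: "g x \<in> perm_orbit G x" using g unfolding perm_orbit_def by auto
  have r: "env_rep G T (g x) = x" using rep_eq[OF x o] .
  have "g x \<in> X" using x T_X G_perm[OF g] by (auto simp: permutes_in_image)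
  then show ?thesis using op_eq[OF good _ g] r by simp
qed

lemma op_G:
  assumes good: "good_env X G T lam" and y: "y \<in> X"
  shows "env_op G T lam y \<in> G"
proof -
  obtain g where g: "g \<in> G" "g (env_rep G T y) = y" using rep(2)[OF y] unfolding perm_orbit_def by auto
  have "lam (env_rep G T y) \<in> G" using good rep(1)[OF y] unfolding good_env_def by auto
  then show ?thesis using op_eq[OF good y g] conjG g by simp
qed

lemma op_equiv:
  assumes good: "good_env X G T lam" and y: "y \<in> X" and k: "k \<in> G"
  shows "env_op G T lam (k y) = perm_conj (env_op G T lam y) k"
proof -
  define x where "x = env_rep G T y"
  obtain g where g: "g \<in> G" "g x = y" using rep(2)[OF y] unfolding perm_orbit_def x_def by auto
  have xT: "x \<in> T" using rep(1)[OF y] x_def by simp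
  have bg: "bij g" and bk: "bij k" using G_perm g k permutes_bij by blast+
  have "env_op G T lam (k y) = env_op G T lam ((k \<circ> g) x)" using g by simp
  also have "\<dots> = perm_conj (lam x) (k \<circ> g)" using op_T[OF good xT G_comp[OF g(1) k]] .
  also have "\<dots> = perm_conj (perm_conj (lam x) g) k"
    unfolding perm_conj_def o_inv_distrib[OF bk bg] by (simp add: o_assoc)
  also have "perm_conj (lam x) g = env_op G T lam y" using op_T[OF good xT g(1)] g by simp
  finally show ?thesis .
qed

lemma gens: "(\<Union>x\<in>T. (\<lambda>g. perm_conj (lam x) g) ` G) \<subseteq> env_op G T lam ` X"
  if good: "good_env X G T lam"
proof
  fix l assume "l \<in> (\<Union>x\<in>T. (\<lambda>g. perm_conj (lam x) g) ` G)"
  then obtain x g where x: "x \<in> T" and g: "g \<in> G" and l: "l = perm_conj (lam x) g" by auto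
  have "g x \<in> X" using x T_X G_perm[OF g] by (auto simp: permutes_in_image)
  then show "l \<in> env_op G T lam ` X" using op_T[OF good x g] l by (metis image_eqI)
qed

lemma G_gen: assumes good: "good_env X G T lam" and H: "perm_group X H"
  and sub: "\<And>y. y \<in> X \<Longrightarrow> env_op G T lam y \<in> H"
  shows "G \<subseteq> H"
proof -
  have "G = generated_perm_group X (\<Union>x\<in>T. (\<lambda>g. perm_conj (lam x) g) ` G)"
    using good unfolding good_env_def by simp
  also have "\<dots> \<subseteq> H" using gen_le[OF H] gens[OF good] sub by blast
  finally show ?thesis .
qed

end

theorem proposition3p5:
  fixes X :: "'a set" and G :: "('a \<Rightarrow> 'a) set" and T :: "'a set"
    and lam kap :: "'a \<Rightarrow> 'a \<Rightarrow> 'a" and gs :: "'a \<Rightarrow> 'a \<Rightarrow> 'a"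
  assumes "X \<noteq> {}"
    and "perm_group X G"
    and "orbit_reps X G T"
    and "(rack_envelope X G T lam \<and> rack_envelope X G T kap)
         \<or> (quandle_envelope X G T lam \<and> quandle_envelope X G T kap)"
    and "\<forall>x\<in>T. \<forall>y\<in>perm_orbit G x. gs y \<in> G \<and> gs y x = y"
  shows "(\<exists>\<phi>. groupoid_iso X (env_op G T lam) (env_op G T kap) \<phi>)
     \<longleftrightarrow> (\<exists>f\<in>sym_normalizer X G. \<forall>x\<in>T.
            kap x = perm_conj (perm_conj (lam (inv (gs (inv f x)) (inv f x))) (gs (inv f x))) f)"
proof -
  interpret env X G T using assms(2,3) by unfold_locales
  have gl: "good_env X G T lam" and gk: "good_env X G T kap"
    using assms(4) rack_good quandle_good by blast+
  have Lperm: "env_op G T l y permutes X" if "good_env X G T l" "y \<in> X" for l y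
    using op_G[OF that] G_perm by blast
  have repgs: "gs y \<in> G \<and> gs y (env_rep G T y) = y \<and> inv (gs y) y = env_rep G T y" if y: "y \<in> X" for y
  proof -
    have a: "gs y \<in> G" "gs y (env_rep G T y) = y" using assms(5) rep[OF y] by auto
    then have "inv (gs y) y = env_rep G T y" using G_perm[OF a(1)] by (metis permutes_inverses(2))
    then show ?thesis using a by auto
  qed
  have L1gs: "env_op G T lam y = perm_conj (lam (inv (gs y) y)) (gs y)" if y: "y \<in> X" for y
    using op_eq[OF gl y] repgs[OF y] by auto
  have kapT: "kap x = env_op G T kap x" if x: "x \<in> T" for x
    using op_T[OF gk x G_id] unfolding perm_conj_def by simp
  show ?thesis
  proof
    assume "\<exists>\<phi>. groupoid_iso X (env_op G T lam) (env_op G T kap) \<phi>"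
    then obtain \<phi> where bij: "bij_betw \<phi> X X"
      and hom: "\<forall>y\<in>X. \<forall>z\<in>X. \<phi> (env_op G T lam y z) = env_op G T kap (\<phi> y) (\<phi> z)"
      unfolding groupoid_iso_def by blast
    define f where "f = (\<lambda>a. if a \<in> X then \<phi> a else a)"
    have "bij_betw f X X" using bij unfolding f_def by (rule bij_betw_cong[THEN iffD1, rotated]) auto
    then have fp: "f permutes X" by (rule bij_imp_permutes) (simp add: f_def)
    have fX: "f y \<in> X" if "y \<in> X" for y using fp that by (simp add: permutes_in_image)
    have ifX: "inv f y \<in> X" if "y \<in> X" for y using permutes_inv[OF fp] that by (simp add: permutes_in_image)
    have K0: "f \<circ> env_op G T lam y = env_op G T kap (f y) \<circ> f" if y: "y \<in> X" for y
    proof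
      fix z show "(f \<circ> env_op G T lam y) z = (env_op G T kap (f y) \<circ> f) z"
      proof (cases "z \<in> X")
        case True
        then have "env_op G T lam y z \<in> X" using Lperm[OF gl y] by (simp add: permutes_in_image)
        then show ?thesis using hom y True by (simp add: f_def)
      next
        case False
        then show ?thesis using Lperm[OF gl y] Lperm[OF gk fX[OF y]]
          by (simp add: f_def permutes_not_in)
      qed
    qed
    have K1: "perm_conj (env_op G T lam y) f = env_op G T kap (f y)" if y: "y \<in> X" for y
    proof -
      have "perm_conj (env_op G T lam y) f = env_op G T kap (f y) \<circ> (f \<circ> inv f)"
        unfolding perm_conj_def using K0[OF y] by (simp add: o_assoc)
      then show ?thesis using permutes_inv_o[OF fp] by simp
    qed
    have K2: "inv f \<circ> env_op G T kap w \<circ> inv (inv f) = env_op G T lam (inv f w)" if w: "w \<in> X" for w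
    proof -
      have "env_op G T kap w = env_op G T kap (f (inv f w))" using fp by (simp add: permutes_inverses)
      also have "\<dots> = f \<circ> env_op G T lam (inv f w) \<circ> inv f" using K1[OF ifX[OF w]] unfolding perm_conj_def by simp
      finally have "inv f \<circ> env_op G T kap w \<circ> inv (inv f) = (inv f \<circ> f) \<circ> env_op G T lam (inv f w) \<circ> (inv f \<circ> f)"
        using permutes_inv_inv[OF fp] by (simp add: o_assoc)
      then show ?thesis using permutes_inv_o[OF fp] by simp
    qed
    have sub1: "G \<subseteq> {g\<in>G. f \<circ> g \<circ> inv f \<in> G}"
    proof (rule G_gen[OF gl conj_group[OF pg fp]])
      fix y assume y: "y \<in> X"
      show "env_op G T lam y \<in> {g\<in>G. f \<circ> g \<circ> inv f \<in> G}"
        using op_G[OF gl y] K1[OF y] op_G[OF gk fX[OF y]] unfolding perm_conj_def by simp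
    qed
    have sub2: "G \<subseteq> {g\<in>G. inv f \<circ> g \<circ> inv (inv f) \<in> G}"
    proof (rule G_gen[OF gk conj_group[OF pg permutes_inv[OF fp]]])
      fix y assume y: "y \<in> X"
      show "env_op G T kap y \<in> {g\<in>G. inv f \<circ> g \<circ> inv (inv f) \<in> G}"
        using op_G[OF gk y] K2[OF y] op_G[OF gl ifX[OF y]] by simp
    qed
    have norm: "f \<in> sym_normalizer X G"
      unfolding sym_normalizer_def
    proof (intro CollectI conjI fp)
      show "(\<lambda>g. perm_conj g f) ` G = G"
      proof
        show "(\<lambda>g. perm_conj g f) ` G \<subseteq> G" using sub1 unfolding perm_conj_def by auto
        show "G \<subseteq> (\<lambda>g. perm_conj g f) ` G"
        proof
          fix g assume g: "g \<in> G"
          have gg: "inv f \<circ> g \<circ> f \<in> G" using sub2 g permutes_inv_inv[OF fp] by auto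
          have "perm_conj (inv f \<circ> g \<circ> f) f = (f \<circ> inv f) \<circ> g \<circ> (f \<circ> inv f)"
            unfolding perm_conj_def by (simp add: o_assoc)
          then have "perm_conj (inv f \<circ> g \<circ> f) f = g" using permutes_inv_o[OF fp] by simp
          then show "g \<in> (\<lambda>g. perm_conj g f) ` G" using gg by (metis image_eqI)
        qed
      qed
    qed
    show "\<exists>f\<in>sym_normalizer X G. \<forall>x\<in>T.
            kap x = perm_conj (perm_conj (lam (inv (gs (inv f x)) (inv f x))) (gs (inv f x))) f"
    proof (intro bexI[OF _ norm] ballI)
      fix x assume x: "x \<in> T"
      have xX: "x \<in> X" using x T_X by auto
      have "kap x = env_op G T kap (f (inv f x))" using kapT[OF x] fp by (simp add: permutes_inverses)
      also have "\<dots> = perm_conj (env_op G T lam (inv f x)) f" using K1[OF ifX[OF xX]] by simp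
      also have "\<dots> = perm_conj (perm_conj (lam (inv (gs (inv f x)) (inv f x))) (gs (inv f x))) f"
        using L1gs[OF ifX[OF xX]] by simp
      finally show "kap x = perm_conj (perm_conj (lam (inv (gs (inv f x)) (inv f x))) (gs (inv f x))) f" .
    qed
  next
    assume "\<exists>f\<in>sym_normalizer X G. \<forall>x\<in>T.
            kap x = perm_conj (perm_conj (lam (inv (gs (inv f x)) (inv f x))) (gs (inv f x))) f"
    then obtain f where fp: "f permutes X" and img: "(\<lambda>g. perm_conj g f) ` G = G"
      and cond: "\<forall>x\<in>T. kap x = perm_conj (perm_conj (lam (inv (gs (inv f x)) (inv f x))) (gs (inv f x))) f"
      unfolding sym_normalizer_def by blast
    have fX: "f y \<in> X" if "y \<in> X" for y using fp that by (simp add: permutes_in_image)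
    have ifX: "inv f y \<in> X" if "y \<in> X" for y using permutes_inv[OF fp] that by (simp add: permutes_in_image)
    have c1: "a \<circ> f \<circ> inv f = a" "a \<circ> inv f \<circ> f = a" for a :: "'a \<Rightarrow> 'a"
      using permutes_inv_o[OF fp] by (simp_all add: o_assoc[symmetric])
    have key: "env_op G T kap (f y) = f \<circ> env_op G T lam y \<circ> inv f" if y: "y \<in> X" for y
    proof -
      define w where "w = f y"
      have w: "w \<in> X" using fX[OF y] w_def by simp
      define x' where "x' = env_rep G T w"
      have x': "x' \<in> T" using rep(1)[OF w] x'_def by simp
      obtain h where h: "h \<in> G" "h x' = w" using rep(2)[OF w] unfolding perm_orbit_def x'_def by auto
      have L2w: "env_op G T kap w = perm_conj (kap x') h" using op_eq[OF gk w h(1)] h(2) x'_def by simp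
      define y' where "y' = inv f x'"
      have y': "y' \<in> X" using ifX x' T_X y'_def by auto
      have kx: "kap x' = perm_conj (env_op G T lam y') f" using cond x' L1gs[OF y'] y'_def by simp
      define k where "k = inv f \<circ> h \<circ> f"
      obtain g where g: "g \<in> G" "h = perm_conj g f" using img h(1) by blast
      have "k = (inv f \<circ> f) \<circ> g \<circ> (inv f \<circ> f)" unfolding k_def g(2) perm_conj_def by (simp add: o_assoc)
      then have kG: "k \<in> G" using g(1) permutes_inv_o[OF fp] by simp
      have ky: "k y' = y" unfolding k_def y'_def using h(2) w_def fp by (simp add: permutes_inverses)
      have L1y: "env_op G T lam y = perm_conj (env_op G T lam y') k"
        using op_equiv[OF gl y' kG] ky by simp
      have hk: "h = f \<circ> k \<circ> inv f" unfolding k_def by (simp add: o_assoc c1 permutes_inv_o[OF fp])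
      have bf: "bij f" and bk: "bij k" and bif: "bij (inv f)"
        using fp permutes_bij G_perm[OF kG] permutes_inv[OF fp] by blast+
      have ih: "inv h = f \<circ> inv k \<circ> inv f"
      proof -
        have "inv h = inv (inv f) \<circ> inv (f \<circ> k)"
          unfolding hk using o_inv_distrib[of "f \<circ> k" "inv f"] bf bk bif bij_comp by blast
        also have "\<dots> = f \<circ> (inv k \<circ> inv f)"
          using o_inv_distrib[OF bf bk] permutes_inv_inv[OF fp] by simp
        finally show ?thesis by (simp add: o_assoc)
      qed
      show ?thesis unfolding w_def[symmetric] L2w kx L1y perm_conj_def ih unfolding hk
        by (simp add: o_assoc c1)
    qed
    show "\<exists>\<phi>. groupoid_iso X (env_op G T lam) (env_op G T kap) \<phi>"
    proof (intro exI)
      show "groupoid_iso X (env_op G T lam) (env_op G T kap) f"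
        unfolding groupoid_iso_def
      proof (intro conjI ballI)
        show "bij_betw f X X" using fp by (rule permutes_imp_bij)
        fix y z assume y: "y \<in> X" and z: "z \<in> X"
        show "f (env_op G T lam y z) = env_op G T kap (f y) (f z)"
          using key[OF y] fp by (simp add: permutes_inverses)
      qed
    qed
  qed
qed

end
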